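(* Let $n\ge 2$ be an integer. A relative equilibrium of the Newtonian planar $(1+2n)$-body problem whose configuration consists of a central mass at the origin surrounded by two homothetic regular $n$-gons, with vertices $\rho_1e^{2\pi i l/n}$ and $\rho_2e^{2\pi i l/n}$ ($l=0,\dots,n-1$, $0<\rho_1<\rho_2$), is never really perverse.
   Context: The Newtonian planar $N$-body problem (gravitational constant $1$): bodies with masses $\mu_i>0$ at positions $r_i\in\mathbb{C}$ satisfy $\mu_i\ddot r_i=\sum_{j\ne i}\mu_i\mu_j\,\frac{r_j-r_i}{|r_j-r_i|^3}$. A relative equilibrium (angular velocity $1$) is a motion $r_i(t)=r_ie^{it}$ that is a solution. A mass system for this configuration is a vector $(m_0,m_1,m_2)$ of positive numbers: mass $m_0$ at the center and mass $m_j$ at every vertex of the $j$-th polygon; total mass $m_0+n(m_1+m_2)$, center of mass at the origin. The relative equilibrium is really perverse if there exist two distinct mass systems with the same total mass and the same center of mass for each of which $r_i(t)=r_ie^{it}$ is a solution. *)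

theory Defs
  imports "HOL-Analysis.Analysis"
begin

definition nbody_solution :: "'i set \<Rightarrow> ('i \<Rightarrow> real) \<Rightarrow> ('i \<Rightarrow> real \<Rightarrow> complex) \<Rightarrow> bool" where
  "nbody_solution I mu q \<longleftrightarrow>
     (\<exists>v :: 'i \<Rightarrow> real \<Rightarrow> complex. \<forall>i\<in>I. \<forall>t::real.
        (q i has_vector_derivative v i t) (at t) \<and>
        (\<exists>a. (v i has_vector_derivative a) (at t) \<and>
             mu i *\<^sub>R a = (\<Sum>j\<in>I - {i}. (mu i * mu j / (cmod (q j t - q i t)) ^ 3) *\<^sub>R (q j t - q i t))))"

text \<open>Bodies of the (1+2n)-body configuration: (0,0) is the central body, (k,l) with
  k \<in> {1,2}, l < n is the l-th vertex of the k-th polygon.\<close>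
definition bodies :: "nat \<Rightarrow> (nat \<times> nat) set" where
  "bodies n = {(0,0)} \<union> {(k,l). (k = 1 \<or> k = 2) \<and> l < n}"

definition twogon_pos :: "nat \<Rightarrow> real \<Rightarrow> real \<Rightarrow> nat \<times> nat \<Rightarrow> complex" where
  "twogon_pos n \<rho>1 \<rho>2 b =
     (if fst b = 0 then 0
      else complex_of_real (if fst b = 1 then \<rho>1 else \<rho>2) *
           exp (2 * of_real pi * \<i> * of_nat (snd b) / of_nat n))"

definition twogon_motion :: "nat \<Rightarrow> real \<Rightarrow> real \<Rightarrow> nat \<times> nat \<Rightarrow> real \<Rightarrow> complex" where
  "twogon_motion n \<rho>1 \<rho>2 b t = twogon_pos n \<rho>1 \<rho>2 b * exp (\<i> * of_real t)"

definition body_mass :: "real \<times> real \<times> real \<Rightarrow> nat \<times> nat \<Rightarrow> real" where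
  "body_mass m b = (case m of (m0, m1, m2) \<Rightarrow>
      (if fst b = 0 then m0 else if fst b = 1 then m1 else m2))"

definition total_mass :: "nat \<Rightarrow> real \<times> real \<times> real \<Rightarrow> real" where
  "total_mass n m = (case m of (m0, m1, m2) \<Rightarrow> m0 + real n * (m1 + m2))"

definition center_of_mass :: "nat \<Rightarrow> real \<Rightarrow> real \<Rightarrow> real \<times> real \<times> real \<Rightarrow> complex" where
  "center_of_mass n \<rho>1 \<rho>2 m =
     (1 / total_mass n m) *\<^sub>R (\<Sum>b\<in>bodies n. body_mass m b *\<^sub>R twogon_pos n \<rho>1 \<rho>2 b)"

definition rel_eq_mass_system :: "nat \<Rightarrow> real \<Rightarrow> real \<Rightarrow> real \<times> real \<times> real \<Rightarrow> bool" where
  "rel_eq_mass_system n \<rho>1 \<rho>2 m \<longleftrightarrow>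
     (case m of (m0, m1, m2) \<Rightarrow> m0 > 0 \<and> m1 > 0 \<and> m2 > 0) \<and>
     center_of_mass n \<rho>1 \<rho>2 m = 0 \<and>
     nbody_solution (bodies n) (body_mass m) (twogon_motion n \<rho>1 \<rho>2)"

definition really_perverse :: "nat \<Rightarrow> real \<Rightarrow> real \<Rightarrow> bool" where
  "really_perverse n \<rho>1 \<rho>2 \<longleftrightarrow>
     (\<exists>m m'. m \<noteq> m' \<and> rel_eq_mass_system n \<rho>1 \<rho>2 m \<and> rel_eq_mass_system n \<rho>1 \<rho>2 m' \<and>
        total_mass n m = total_mass n m' \<and>
        center_of_mass n \<rho>1 \<rho>2 m = center_of_mass n \<rho>1 \<rho>2 m')"

end

theory Submission
  imports Defs
begin

definition AC :: "nat \<Rightarrow> real" where "AC k = ((-1/2::real) gchoose k) * (-1)^k"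

lemma of_real_gchoose: "(of_real (a gchoose k) :: complex) = (of_real a) gchoose k"
  by (simp add: gbinomial_prod_rev of_real_prod)

lemma AC_eq: "AC k = (\<Prod>i<k. 1/2 + real i) / fact k"
proof -
  have "(\<Prod>i=0..<k. (-1/2::real) - of_nat i) = (\<Prod>i<k. (-1) * (1/2 + real i))"
    by (rule prod.cong) auto
  also have "\<dots> = (-1)^k * (\<Prod>i<k. 1/2 + real i)"
    by (simp only: prod.distrib prod_constant card_lessThan)
  finally show ?thesis unfolding AC_def gbinomial_prod_rev
    by (simp add: field_simps)
qed

lemma AC_nonneg: "AC k \<ge> 0"
  unfolding AC_eq by (intro divide_nonneg_pos prod_nonneg) auto

lemma AC_0 [simp]: "AC 0 = 1" by (simp add: AC_def)
lemma AC_1 [simp]: "AC 1 = 1/2" by (simp add: AC_def)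
lemma AC_Suc0 [simp]: "AC (Suc 0) = 1/2" using AC_1 by simp

definition sq :: "complex \<Rightarrow> complex" where "sq w = (1 - w) powr (-1/2)"

lemma sq_sums: assumes "norm w < 1" shows "(\<lambda>k. of_real (AC k) * w^k) sums sq w"
proof -
  have "(\<lambda>k. ((-1/2) gchoose k) * (-w)^k) sums (1 + (-w)) powr (-1/2)"
    using gen_binomial_complex[of "-w" "-1/2"] assms by simp
  moreover have "((-1/2) gchoose k) * (-w)^k = of_real (AC k) * w^k" for k
  proof -
    have "(of_real (-1/2::real) :: complex) = -1/2" by simp
    hence "((-1/2::complex) gchoose k) = of_real ((-1/2::real) gchoose k)"
      by (metis of_real_gchoose)
    thus ?thesis unfolding AC_def by (simp add: power_minus')
  qed
  ultimately show ?thesis unfolding sq_def by simp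
qed

lemma sq_prod: assumes "norm w < 1" shows "sq w * sq (cnj w) = of_real (1 / norm (1 - w))"
proof -
  have re: "Re (1 - w) > 0" using assms
    by (smt (verit) abs_Re_le_cmod minus_complex.simps(1) one_complex.simps(1))
  have nz: "1 - w \<noteq> 0" using re by auto
  have "sq (cnj w) = cnj (sq w)" unfolding sq_def
    using cnj_powr[of "1 - w" "-1/2"] re by simp
  hence "sq w * sq (cnj w) = sq w * cnj (sq w)" by (simp only:)
  also have "\<dots> = of_real ((norm (sq w))^2)" by (rule complex_norm_square[symmetric])
  finally have "sq w * sq (cnj w) = of_real ((norm (sq w))^2)" .
  moreover have "norm (sq w) = norm (1 - w) powr (-1/2)"
    unfolding sq_def by (subst norm_powr_real_powr') auto
  moreover have "(norm (1 - w) powr (-1/2))^2 = 1 / norm (1 - w)"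
  proof -
    have "(norm (1 - w) powr (-1/2))^2 = norm (1 - w) powr (-1/2 + -1/2)"
      by (simp only: power2_eq_square powr_add)
    also have "\<dots> = norm (1 - w) powr (-1)" by simp
    also have "\<dots> = 1 / norm (1 - w)" using nz by (simp add: powr_neg_one)
    finally show ?thesis .
  qed
  ultimately show ?thesis by (simp only:)
qed

definition zf :: "complex \<Rightarrow> nat \<Rightarrow> nat \<Rightarrow> nat \<Rightarrow> real" where
  "zf \<omega> n m k = (if \<omega>^m * cnj \<omega>^k = 1 then real n else 0)"

lemma zf_nonneg: "zf \<omega> n m k \<ge> 0" by (simp add: zf_def)

lemma zf_diag: "norm \<omega> = 1 \<Longrightarrow> zf \<omega> n m m = real n"
proof -
  assume a: "norm \<omega> = 1"
  have "\<omega> * cnj \<omega> = 1" using complex_norm_square[of \<omega>] a by simp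
  hence "\<omega>^m * cnj \<omega>^m = 1" by (metis power_mult_distrib power_one)
  thus ?thesis unfolding zf_def by simp
qed

lemma root_sum:
  assumes "\<omega>^n = 1"
  shows "(\<Sum>l<n. (\<omega>^l)^m * cnj (\<omega>^l)^k) = of_real (zf \<omega> n m k)"
proof -
  have "(\<Sum>l<n. (\<omega>^l)^m * cnj (\<omega>^l)^k) = (\<Sum>l<n. (\<omega>^m * cnj \<omega>^k)^l)"
  proof (rule sum.cong)
    fix l assume "l \<in> {..<n}"
    have "(\<omega>^l)^m = (\<omega>^m)^l" by (metis power_mult mult.commute)
    moreover have "cnj (\<omega>^l)^k = (cnj \<omega>^k)^l" by (metis complex_cnj_power power_mult mult.commute)
    ultimately show "(\<omega>^l)^m * cnj (\<omega>^l)^k = (\<omega>^m * cnj \<omega>^k)^l"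
      by (simp only: power_mult_distrib)
  qed simp
  also have "\<dots> = of_real (zf \<omega> n m k)"
  proof -
    have "(\<omega>^m * cnj \<omega>^k)^n = 1"
    proof -
      have "(\<omega>^m)^n = 1" by (metis assms power_mult mult.commute power_one)
      moreover have "(cnj \<omega>^k)^n = 1"
        by (metis assms complex_cnj_one complex_cnj_power power_mult mult.commute power_one)
      ultimately show ?thesis by (simp only: power_mult_distrib mult_1)
    qed
    thus ?thesis unfolding sum_gp_strict zf_def by auto
  qed
  finally show ?thesis .
qed

lemma swap4: "(\<Sum>l\<in>A. \<Sum>i\<in>B. \<Sum>j\<in>C. \<Sum>k\<in>D. f l i j k) = (\<Sum>i\<in>B. \<Sum>j\<in>C. \<Sum>k\<in>D. \<Sum>l\<in>A. f l i j k)"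
proof -
  have "(\<Sum>l\<in>A. \<Sum>i\<in>B. \<Sum>j\<in>C. \<Sum>k\<in>D. f l i j k) = (\<Sum>i\<in>B. \<Sum>l\<in>A. \<Sum>j\<in>C. \<Sum>k\<in>D. f l i j k)"
    by (rule sum.swap)
  also have "\<dots> = (\<Sum>i\<in>B. \<Sum>j\<in>C. \<Sum>l\<in>A. \<Sum>k\<in>D. f l i j k)"
    by (rule sum.cong[OF refl], rule sum.swap)
  also have "\<dots> = (\<Sum>i\<in>B. \<Sum>j\<in>C. \<Sum>k\<in>D. \<Sum>l\<in>A. f l i j k)"
    by (rule sum.cong[OF refl], rule sum.cong[OF refl], rule sum.swap)
  finally show ?thesis .
qed

lemma key:
  fixes r :: real and \<omega> :: complex and n p :: nat
  assumes r0: "0 \<le> r" and r1: "r < 1" and wn: "\<omega>^n = 1" and w1: "norm \<omega> = 1"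
  shows "Re (\<Sum>l<n. (\<omega>^l)^p * (sq (of_real r * \<omega>^l) / (1 - of_real r * \<omega>^l)
            * sq (of_real r * cnj (\<omega>^l)))) \<ge> (if p = 0 then real n * (1 + r^2/4) else 0)"
proof -
  define SN where "SN N w = (\<Sum>k<N. of_real (AC k) * w^k)" for N :: nat and w :: complex
  define GN where "GN N w = (\<Sum>j<N. w^j)" for N :: nat and w :: complex
  define W where "W l = of_real r * \<omega>^l" for l
  define Wc where "Wc l = of_real r * cnj (\<omega>^l)" for l
  define T where "T i j k = AC i * AC k * r^(i+j+k) * zf \<omega> n (p+k+j) i" for i j k
  define F where "F N = (\<Sum>i<N. \<Sum>j<N. \<Sum>k<N. T i j k)" for N
  have nW: "norm (W l) < 1" for l using r0 r1 w1 by (simp add: W_def norm_mult norm_power)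
  have nWc: "norm (Wc l) < 1" for l using r0 r1 w1 by (simp add: Wc_def norm_mult norm_power)
  have Tnn: "T i j k \<ge> 0" for i j k
    unfolding T_def using AC_nonneg zf_nonneg r0 by (intro mult_nonneg_nonneg) auto
  have limS: "(\<lambda>N. SN N w) \<longlonglongrightarrow> sq w" if "norm w < 1" for w
    using sq_sums[OF that] unfolding sums_def SN_def .
  have limG: "(\<lambda>N. GN N w) \<longlonglongrightarrow> 1 / (1 - w)" if "norm w < 1" for w
    using geometric_sums[OF that] unfolding sums_def GN_def .
  have lim: "(\<lambda>N. \<Sum>l<n. (\<omega>^l)^p * (SN N (W l) * GN N (W l) * SN N (Wc l)))
      \<longlonglongrightarrow> (\<Sum>l<n. (\<omega>^l)^p * (sq (W l) * (1 / (1 - W l)) * sq (Wc l)))"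
    by (intro tendsto_intros limS limG nW nWc)
  have expand: "(\<omega>^l)^p * (SN N (W l) * GN N (W l) * SN N (Wc l)) =
      (\<Sum>i<N. \<Sum>j<N. \<Sum>k<N. of_real (AC i * AC k * r^(i+j+k)) * ((\<omega>^l)^(p+k+j) * cnj (\<omega>^l)^i))"
    for N l
    unfolding SN_def GN_def W_def Wc_def
    by (simp only: sum_distrib_left sum_distrib_right)
       (simp add: power_add power_mult_distrib mult_ac)
  have eq: "(\<Sum>l<n. (\<omega>^l)^p * (SN N (W l) * GN N (W l) * SN N (Wc l))) = of_real (F N)" for N
  proof -
    have "(\<Sum>l<n. (\<omega>^l)^p * (SN N (W l) * GN N (W l) * SN N (Wc l))) =
      (\<Sum>l<n. \<Sum>i<N. \<Sum>j<N. \<Sum>k<N. of_real (AC i * AC k * r^(i+j+k)) * ((\<omega>^l)^(p+k+j) * cnj (\<omega>^l)^i))"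
      by (simp only: expand)
    also have "\<dots> = (\<Sum>i<N. \<Sum>j<N. \<Sum>k<N. \<Sum>l<n. of_real (AC i * AC k * r^(i+j+k)) * ((\<omega>^l)^(p+k+j) * cnj (\<omega>^l)^i))"
      by (rule swap4)
    also have "\<dots> = (\<Sum>i<N. \<Sum>j<N. \<Sum>k<N. of_real (T i j k))"
      by (simp only: T_def root_sum[OF wn] of_real_mult flip: sum_distrib_left)
    also have "\<dots> = of_real (F N)" by (simp only: F_def of_real_sum)
    finally show ?thesis .
  qed
  have limF: "F \<longlonglongrightarrow> Re (\<Sum>l<n. (\<omega>^l)^p * (sq (W l) * (1 / (1 - W l)) * sq (Wc l)))"
    using tendsto_Re[OF lim] unfolding eq by simp
  have bound: "F N \<ge> (if p = 0 then real n * (1 + r^2/4) else 0)" if N2: "N \<ge> 2" for N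
  proof (cases "p = 0")
    case False
    thus ?thesis unfolding F_def using Tnn by (simp add: sum_nonneg)
  next
    case True
    have inner: "(\<Sum>j<N. \<Sum>k<N. T i j k) \<ge> T i 0 i" if "i < N" for i
    proof -
      have "T i 0 i \<le> (\<Sum>k<N. T i 0 k)" using that Tnn by (intro member_le_sum) auto
      also have "\<dots> \<le> (\<Sum>j<N. \<Sum>k<N. T i j k)"
        using that Tnn by (intro member_le_sum[where f = "\<lambda>j. \<Sum>k<N. T i j k"] sum_nonneg) auto
      finally show ?thesis .
    qed
    have "(\<Sum>i<2. T i 0 i) \<le> (\<Sum>i<N. T i 0 i)"
      using N2 Tnn by (intro sum_mono2) auto
    also have "\<dots> \<le> F N" unfolding F_def by (intro sum_mono inner) auto
    finally have "(\<Sum>i<2. T i 0 i) \<le> F N" .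
    moreover have "(\<Sum>i<2. T i 0 i) = real n * (1 + r^2/4)"
      using True zf_diag[OF w1, of n 0] zf_diag[OF w1, of n 1]
      by (simp add: T_def numeral_2_eq_2 algebra_simps power2_eq_square)
    ultimately show ?thesis using True by simp
  qed
  have "(if p = 0 then real n * (1 + r^2/4) else 0) \<le> Re (\<Sum>l<n. (\<omega>^l)^p * (sq (W l) * (1 / (1 - W l)) * sq (Wc l)))"
    by (rule LIMSEQ_le_const[OF limF]) (use bound in blast)
  thus ?thesis unfolding W_def Wc_def by simp
qed

lemma cnj_div_cube: "z \<noteq> 0 \<Longrightarrow> 1 / (z * of_real (norm z)) = cnj z / of_real (norm z ^ 3)"
proof -
  assume z: "z \<noteq> 0"
  have sq: "z * cnj z = of_real (norm z ^ 2)" by (simp only: complex_norm_square)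
  have "cnj z \<noteq> 0" using z by simp
  moreover have "norm z \<noteq> 0" using z by simp
  ultimately show ?thesis using sq z
    by (simp add: field_simps power3_eq_cube power2_eq_square)
qed

lemma term_eq:
  fixes r :: real and e :: complex
  assumes "0 \<le> r" "r < 1" "norm e = 1"
  shows "sq (of_real r * e) / (1 - of_real r * e) * sq (of_real r * cnj e)
         = cnj (1 - of_real r * e) / of_real (norm (1 - of_real r * e) ^ 3)"
proof -
  let ?w = "of_real r * e"
  have nw: "norm ?w < 1" using assms by (simp add: norm_mult)
  have nz: "1 - ?w \<noteq> 0" using nw by auto
  have "sq ?w * sq (cnj ?w) = of_real (1 / norm (1 - ?w))" by (rule sq_prod[OF nw])
  hence "sq ?w / (1 - ?w) * sq (of_real r * cnj e) = 1 / ((1 - ?w) * of_real (norm (1 - ?w)))"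
    using nz by (simp add: field_simps)
  also have "\<dots> = cnj (1 - ?w) / of_real (norm (1 - ?w) ^ 3)" by (rule cnj_div_cube[OF nz])
  finally show ?thesis .
qed

lemma Re_cnj_div: "Re (cnj z / of_real x) = Re z / x" by (simp add: Re_divide_of_real)
lemma Re_mult_div: "Re (a * (b / of_real x)) = Re (a * b) / x"
proof -
  have "a * (b / of_real x) = (a * b) / of_real x" by simp
  thus ?thesis by (simp only: Re_divide_of_real)
qed
lemma cmod_one_cnj: "cmod (1 - cnj z) = cmod (1 - z)"
  by (metis complex_cnj_diff complex_cnj_one complex_mod_cnj)

lemma Re_ofr: "Re (of_real a * z) = a * Re z" by simp

lemma frac_scale: "(\<rho>::real) > 0 \<Longrightarrow> c > 0 \<Longrightarrow> a = \<rho> * X \<Longrightarrow> b = \<rho> * c \<Longrightarrow> a / b^3 = 1/\<rho>^2 * (X / c^3)"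
  by (simp add: field_simps power3_eq_cube power2_eq_square)

definition ee :: "nat \<Rightarrow> nat \<Rightarrow> complex" where
  "ee n l = exp (2 * of_real pi * \<i> * of_nat l / of_nat n)"

definition om :: "nat \<Rightarrow> complex" where "om n = exp (2 * of_real pi * \<i> / of_nat n)"

lemma ee_om: "ee n l = om n ^ l"
  unfolding ee_def om_def by (simp add: exp_of_nat_mult [symmetric] mult_ac)

lemma om_pow: "n > 0 \<Longrightarrow> om n ^ n = 1"
  unfolding om_def by (simp add: exp_of_nat_mult [symmetric])

lemma om_norm: "norm (om n) = 1"
  unfolding om_def by (simp add: norm_exp_eq_Re)

lemma ee_norm: "norm (ee n l) = 1"
  by (simp add: ee_om norm_power om_norm)

lemma K2:
  assumes r1: "0 < \<rho>1" and r12: "\<rho>1 < \<rho>2" and n: "n > 0"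
  shows "(\<Sum>l<n. Re (of_real \<rho>1 * ee n l - of_real \<rho>2) / (cmod (of_real \<rho>1 * ee n l - of_real \<rho>2))^3)
          < - real n / \<rho>2^2"
proof -
  define r where "r = \<rho>1 / \<rho>2"
  have r0: "0 \<le> r" "r < 1" "r > 0" using r1 r12 by (auto simp: r_def)
  have r2: "\<rho>2 > 0" using r1 r12 by simp
  define w where "w l = of_real r * ee n l" for l
  have wpos: "cmod (1 - w l) > 0" for l
  proof -
    have "norm (w l) < 1" using r0 by (simp add: w_def norm_mult ee_norm)
    hence "1 - w l \<noteq> 0" by auto
    thus ?thesis by simp
  qed
  have k: "Re (\<Sum>l<n. (om n^l)^0 * (sq (of_real r * om n^l) / (1 - of_real r * om n^l)
            * sq (of_real r * cnj (om n^l)))) \<ge> real n * (1 + r^2/4)"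
    using key[OF r0(1,2) om_pow[OF n] om_norm, of 0] by simp
  have "Re (\<Sum>l<n. (om n^l)^0 * (sq (of_real r * om n^l) / (1 - of_real r * om n^l)
            * sq (of_real r * cnj (om n^l)))) = (\<Sum>l<n. Re (1 - w l) / norm (1 - w l) ^ 3)"
    unfolding Re_sum
  proof (rule sum.cong[OF refl])
    fix l
    have e: "sq (of_real r * om n^l) / (1 - of_real r * om n^l) * sq (of_real r * cnj (om n^l))
      = cnj (1 - w l) / of_real (norm (1 - w l)^3)"
      unfolding w_def ee_om by (rule term_eq[OF r0(1,2)]) (simp add: om_norm norm_power)
    show "Re ((om n^l)^0 * (sq (of_real r * om n^l) / (1 - of_real r * om n^l)
            * sq (of_real r * cnj (om n^l)))) = Re (1 - w l) / norm (1 - w l) ^ 3"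
      unfolding e by (simp only: power_0 power_one_right mult_1_left Re_cnj_div Re_mult_div ee_om)
  qed
  with k have k2: "(\<Sum>l<n. Re (1 - w l) / norm (1 - w l) ^ 3) \<ge> real n * (1 + r^2/4)" by simp
  have t: "Re (of_real \<rho>1 * ee n l - of_real \<rho>2) / (cmod (of_real \<rho>1 * ee n l - of_real \<rho>2))^3
        = - (1 / \<rho>2^2) * (Re (1 - w l) / norm (1 - w l) ^ 3)" for l
  proof -
    have "of_real \<rho>1 * ee n l - of_real \<rho>2 = - of_real \<rho>2 * (1 - w l)"
      using r2 by (simp add: w_def r_def field_simps)
    hence "Re (of_real \<rho>1 * ee n l - of_real \<rho>2) = - \<rho>2 * Re (1 - w l)"
      and "cmod (of_real \<rho>1 * ee n l - of_real \<rho>2) = \<rho>2 * norm (1 - w l)"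
      using r2 by (simp_all add: norm_mult)
    thus ?thesis using r2 wpos[of l] by (simp add: field_simps power3_eq_cube power2_eq_square)
  qed
  have "(\<Sum>l<n. Re (of_real \<rho>1 * ee n l - of_real \<rho>2) / (cmod (of_real \<rho>1 * ee n l - of_real \<rho>2))^3)
      = - (1 / \<rho>2^2) * (\<Sum>l<n. Re (1 - w l) / norm (1 - w l) ^ 3)"
    by (simp only: t sum_distrib_left)
  also have "\<dots> \<le> - (1 / \<rho>2^2) * (real n * (1 + r^2/4))"
    using k2 r2 by (intro mult_left_mono_neg) auto
  also have "\<dots> < - real n / \<rho>2^2"
    using r0 r2 n by (simp add: field_simps)
  finally show ?thesis .
qed

lemma K1:
  assumes r1: "0 < \<rho>1" and r12: "\<rho>1 < \<rho>2" and n: "n > 0"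
  shows "(\<Sum>l<n. Re (of_real \<rho>2 * ee n l - of_real \<rho>1) / (cmod (of_real \<rho>2 * ee n l - of_real \<rho>1))^3) \<ge> 0"
proof -
  define r where "r = \<rho>1 / \<rho>2"
  have r0: "0 \<le> r" "r < 1" "r > 0" using r1 r12 by (auto simp: r_def)
  have r2: "\<rho>2 > 0" using r1 r12 by simp
  define w where "w l = of_real r * ee n l" for l
  have wpos: "cmod (1 - w l) > 0" for l
  proof -
    have "norm (w l) < 1" using r0 by (simp add: w_def norm_mult ee_norm)
    hence "1 - w l \<noteq> 0" by auto
    thus ?thesis by simp
  qed
  have k: "Re (\<Sum>l<n. (om n^l)^1 * (sq (of_real r * om n^l) / (1 - of_real r * om n^l)
            * sq (of_real r * cnj (om n^l)))) \<ge> 0"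
    using key[OF r0(1,2) om_pow[OF n] om_norm, of 1] by simp
  have "Re (\<Sum>l<n. (om n^l)^1 * (sq (of_real r * om n^l) / (1 - of_real r * om n^l)
            * sq (of_real r * cnj (om n^l)))) = (\<Sum>l<n. Re (ee n l * cnj (1 - w l)) / norm (1 - w l) ^ 3)"
    unfolding Re_sum
  proof (rule sum.cong[OF refl])
    fix l
    have e: "sq (of_real r * om n^l) / (1 - of_real r * om n^l) * sq (of_real r * cnj (om n^l))
      = cnj (1 - w l) / of_real (norm (1 - w l)^3)"
      unfolding w_def ee_om by (rule term_eq[OF r0(1,2)]) (simp add: om_norm norm_power)
    show "Re ((om n^l)^1 * (sq (of_real r * om n^l) / (1 - of_real r * om n^l)
            * sq (of_real r * cnj (om n^l)))) = Re (ee n l * cnj (1 - w l)) / norm (1 - w l) ^ 3"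
      unfolding e by (simp only: power_0 power_one_right mult_1_left Re_cnj_div Re_mult_div ee_om)
  qed
  with k have k2: "(\<Sum>l<n. Re (ee n l * cnj (1 - w l)) / norm (1 - w l) ^ 3) \<ge> 0" by simp
  have t: "Re (of_real \<rho>2 * ee n l - of_real \<rho>1) / (cmod (of_real \<rho>2 * ee n l - of_real \<rho>1))^3
        = (1 / \<rho>2^2) * (Re (ee n l * cnj (1 - w l)) / norm (1 - w l) ^ 3)" for l
  proof -
    have ec: "ee n l * cnj (ee n l) = 1"
      using complex_norm_square[of "ee n l"] ee_norm[of n l] by simp
    have "of_real \<rho>2 * ee n l - of_real \<rho>1 = of_real \<rho>2 * (ee n l * cnj (1 - w l))"
      using r2 ec by (simp add: w_def r_def field_simps)
    hence h1: "Re (of_real \<rho>2 * ee n l - of_real \<rho>1) = \<rho>2 * Re (ee n l * cnj (1 - w l))"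
      and h2: "cmod (of_real \<rho>2 * ee n l - of_real \<rho>1) = \<rho>2 * norm (1 - w l)"
      using r2 by (simp_all only: norm_mult ee_norm cmod_one_cnj Re_ofr norm_of_real complex_mod_cnj mult_1_left abs_of_pos)
    show ?thesis by (rule frac_scale[OF r2 wpos h1 h2])
  qed
  have "(\<Sum>l<n. Re (of_real \<rho>2 * ee n l - of_real \<rho>1) / (cmod (of_real \<rho>2 * ee n l - of_real \<rho>1))^3)
      = (1 / \<rho>2^2) * (\<Sum>l<n. Re (ee n l * cnj (1 - w l)) / norm (1 - w l) ^ 3)"
    by (simp only: t sum_distrib_left)
  also have "\<dots> \<ge> 0" using k2 r2 by simp
  finally show ?thesis by simp
qed

lemma deriv_rot: "((\<lambda>t. c * exp (\<i> * of_real t)) has_vector_derivative (c * \<i> * exp (\<i> * of_real t))) (at t)"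
proof -
  have "((\<lambda>z. c * exp (\<i> * z)) has_field_derivative (c * \<i> * exp (\<i> * of_real t))) (at (of_real t))"
    by (auto intro!: derivative_eq_intros)
  thus ?thesis by (rule has_vector_derivative_real_field)
qed

lemma motion_eq:
  assumes sol: "nbody_solution (bodies n) (body_mass m) (twogon_motion n \<rho>1 \<rho>2)"
    and i: "i \<in> bodies n" and pos: "body_mass m i > 0"
  shows "- twogon_pos n \<rho>1 \<rho>2 i = (\<Sum>j\<in>bodies n - {i}. (body_mass m j / (cmod (twogon_pos n \<rho>1 \<rho>2 j - twogon_pos n \<rho>1 \<rho>2 i)) ^ 3) *\<^sub>R (twogon_pos n \<rho>1 \<rho>2 j - twogon_pos n \<rho>1 \<rho>2 i))"
proof -
  let ?P = "twogon_pos n \<rho>1 \<rho>2"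
  obtain v where v: "\<forall>i\<in>bodies n. \<forall>t::real.
        (twogon_motion n \<rho>1 \<rho>2 i has_vector_derivative v i t) (at t) \<and>
        (\<exists>a. (v i has_vector_derivative a) (at t) \<and>
             body_mass m i *\<^sub>R a = (\<Sum>j\<in>bodies n - {i}. (body_mass m i * body_mass m j / (cmod (twogon_motion n \<rho>1 \<rho>2 j t - twogon_motion n \<rho>1 \<rho>2 i t)) ^ 3) *\<^sub>R (twogon_motion n \<rho>1 \<rho>2 j t - twogon_motion n \<rho>1 \<rho>2 i t)))"
    using sol unfolding nbody_solution_def by blast
  have mot: "twogon_motion n \<rho>1 \<rho>2 j = (\<lambda>t. ?P j * exp (\<i> * of_real t))" for j
    by (rule ext) (simp add: twogon_motion_def)
  have vi: "v i = (\<lambda>t. ?P i * \<i> * exp (\<i> * of_real t))"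
  proof
    fix t
    have "(twogon_motion n \<rho>1 \<rho>2 i has_vector_derivative v i t) (at t)" using v i by blast
    thus "v i t = ?P i * \<i> * exp (\<i> * of_real t)"
      unfolding mot using deriv_rot vector_derivative_unique_at by blast
  qed
  obtain a where a: "(v i has_vector_derivative a) (at 0)"
     and eq: "body_mass m i *\<^sub>R a = (\<Sum>j\<in>bodies n - {i}. (body_mass m i * body_mass m j / (cmod (twogon_motion n \<rho>1 \<rho>2 j 0 - twogon_motion n \<rho>1 \<rho>2 i 0)) ^ 3) *\<^sub>R (twogon_motion n \<rho>1 \<rho>2 j 0 - twogon_motion n \<rho>1 \<rho>2 i 0))"
    using v i by blast
  have "a = ?P i * \<i> * \<i> * exp (\<i> * of_real 0)"
    using a unfolding vi using deriv_rot[of "?P i * \<i>" 0] vector_derivative_unique_at by blast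
  hence a': "a = - ?P i" by (simp add: mult.assoc)
  have m0: "twogon_motion n \<rho>1 \<rho>2 j 0 = ?P j" for j by (simp add: twogon_motion_def)
  have "body_mass m i *\<^sub>R (- ?P i) = body_mass m i *\<^sub>R (\<Sum>j\<in>bodies n - {i}. (body_mass m j / (cmod (?P j - ?P i)) ^ 3) *\<^sub>R (?P j - ?P i))"
    using eq unfolding a' m0 scaleR_sum_right scaleR_scaleR by (simp add: mult_ac)
  hence "body_mass m i = 0 \<or> - ?P i = (\<Sum>j\<in>bodies n - {i}. (body_mass m j / (cmod (?P j - ?P i)) ^ 3) *\<^sub>R (?P j - ?P i))"
    by (simp only: scaleR_cancel_left) blast
  thus ?thesis using pos by simp
qed

lemma frac_scale0: "(\<rho>::real) > 0 \<Longrightarrow> c \<ge> 0 \<Longrightarrow> a = \<rho> * X \<Longrightarrow> b = \<rho> * c \<Longrightarrow> a / b^3 = 1/\<rho>^2 * (X / c^3)"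
proof (cases "c = 0")
  case False
  assume "\<rho> > 0" "c \<ge> 0" "a = \<rho> * X" "b = \<rho> * c"
  thus ?thesis using False by (intro frac_scale) auto
qed simp

lemma self_scale:
  assumes "(\<rho>::real) > 0"
  shows "Re (of_real \<rho> * e - of_real \<rho>) / cmod (of_real \<rho> * e - of_real \<rho>)^3 = 1/\<rho>^2 * (Re (e - 1) / cmod (e - 1)^3)"
proof -
  have h: "of_real \<rho> * e - of_real \<rho> = of_real \<rho> * (e - 1)" by (simp add: algebra_simps)
  show ?thesis
    by (rule frac_scale0[OF assms]) (simp_all only: h Re_ofr norm_mult norm_of_real abs_of_pos[OF assms] norm_ge_zero)
qed

lemma bodies_minus1: "bodies n - {(1,0)} = insert (0,0) (Pair 1 ` {1..<n} \<union> Pair 2 ` {..<n})"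
  unfolding bodies_def by auto

lemma bodies_minus2: "bodies n - {(2,0)} = insert (0,0) (Pair 1 ` {..<n} \<union> Pair 2 ` {1..<n})"
  unfolding bodies_def by auto

lemma sum_pair_img: "sum g (Pair k ` A) = (\<Sum>l\<in>A. g (k,l))"
  by (subst sum.reindex) (auto simp: inj_on_def)

lemma sum_split_gen: "k1 \<noteq> k2 \<Longrightarrow> k1 \<noteq> 0 \<Longrightarrow> k2 \<noteq> 0 \<Longrightarrow> finite A \<Longrightarrow> finite B \<Longrightarrow>
   sum g (insert (0,0) (Pair k1 ` A \<union> Pair k2 ` B)) = g (0,0) + (\<Sum>l\<in>A. g (k1,l)) + (\<Sum>l\<in>B. g (k2,l))"
proof -
  assume a: "k1 \<noteq> k2" "k1 \<noteq> 0" "k2 \<noteq> 0" "finite A" "finite B"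
  have "sum g (insert (0,0) (Pair k1 ` A \<union> Pair k2 ` B)) = g (0,0) + sum g (Pair k1 ` A \<union> Pair k2 ` B)"
    using a by (subst sum.insert) auto
  also have "sum g (Pair k1 ` A \<union> Pair k2 ` B) = sum g (Pair k1 ` A) + sum g (Pair k2 ` B)"
    using a by (intro sum.union_disjoint) auto
  finally show ?thesis by (simp add: sum_pair_img add.assoc)
qed

lemma sum_split1: "(\<Sum>j\<in>bodies n - {(1,0)}. g j) = g (0,0) + (\<Sum>l\<in>{1..<n}. g (1,l)) + (\<Sum>l<n. g (2,l))"
  unfolding bodies_minus1 by (rule sum_split_gen) auto

lemma sum_split2: "(\<Sum>j\<in>bodies n - {(2,0)}. g j) = g (0,0) + (\<Sum>l<n. g (1,l)) + (\<Sum>l\<in>{1..<n}. g (2,l))"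
  unfolding bodies_minus2 by (rule sum_split_gen) auto

lemma pos0: "twogon_pos n \<rho>1 \<rho>2 (0,0) = 0" by (simp add: twogon_pos_def)
lemma pos1: "twogon_pos n \<rho>1 \<rho>2 (1,l) = of_real \<rho>1 * ee n l" by (simp add: twogon_pos_def ee_def)
lemma pos2: "twogon_pos n \<rho>1 \<rho>2 (2,l) = of_real \<rho>2 * ee n l" by (simp add: twogon_pos_def ee_def)
lemma ee0: "ee n 0 = 1" by (simp add: ee_def)

definition sig :: "nat \<Rightarrow> real" where
  "sig n = (\<Sum>l\<in>{1..<n}. Re (ee n l - 1) / cmod (ee n l - 1)^3)"
definition Yf :: "nat \<Rightarrow> real \<Rightarrow> real \<Rightarrow> real" where
  "Yf n \<rho>1 \<rho>2 = (\<Sum>l<n. Re (of_real \<rho>2 * ee n l - of_real \<rho>1) / (cmod (of_real \<rho>2 * ee n l - of_real \<rho>1))^3)"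
definition Zf :: "nat \<Rightarrow> real \<Rightarrow> real \<Rightarrow> real" where
  "Zf n \<rho>1 \<rho>2 = (\<Sum>l<n. Re (of_real \<rho>1 * ee n l - of_real \<rho>2) / (cmod (of_real \<rho>1 * ee n l - of_real \<rho>2))^3)"

lemma re_eq:
  assumes "nbody_solution (bodies n) (body_mass m) (twogon_motion n \<rho>1 \<rho>2)"
    and "i \<in> bodies n" and "body_mass m i > 0"
  shows "- Re (twogon_pos n \<rho>1 \<rho>2 i) = (\<Sum>j\<in>bodies n - {i}. body_mass m j *
     (Re (twogon_pos n \<rho>1 \<rho>2 j - twogon_pos n \<rho>1 \<rho>2 i) / (cmod (twogon_pos n \<rho>1 \<rho>2 j - twogon_pos n \<rho>1 \<rho>2 i)) ^ 3))"
proof -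
  have "Re (- twogon_pos n \<rho>1 \<rho>2 i) = Re (\<Sum>j\<in>bodies n - {i}. (body_mass m j / (cmod (twogon_pos n \<rho>1 \<rho>2 j - twogon_pos n \<rho>1 \<rho>2 i)) ^ 3) *\<^sub>R (twogon_pos n \<rho>1 \<rho>2 j - twogon_pos n \<rho>1 \<rho>2 i))"
    using motion_eq[OF assms] by simp
  thus ?thesis unfolding Re_sum by simp
qed

lemma eqs:
  assumes rel: "rel_eq_mass_system n \<rho>1 \<rho>2 (a0, a1, a2)" and r1: "0 < \<rho>1" and r12: "\<rho>1 < \<rho>2"
    and n: "n > 0"
  shows "- \<rho>1 = - a0 / \<rho>1^2 + a1 * (sig n / \<rho>1^2) + a2 * Yf n \<rho>1 \<rho>2"
    and "- \<rho>2 = - a0 / \<rho>2^2 + a1 * Zf n \<rho>1 \<rho>2 + a2 * (sig n / \<rho>2^2)"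
proof -
  have pos: "a0 > 0" "a1 > 0" "a2 > 0" and sol: "nbody_solution (bodies n) (body_mass (a0,a1,a2)) (twogon_motion n \<rho>1 \<rho>2)"
    using rel unfolding rel_eq_mass_system_def by auto
  have r2: "\<rho>2 > 0" using r1 r12 by simp
  have b1: "(1,0) \<in> bodies n" and b2: "(2,0) \<in> bodies n" using n by (auto simp: bodies_def)
  have m0: "body_mass (a0,a1,a2) (0,l) = a0" and m1: "body_mass (a0,a1,a2) (1,l) = a1"
    and m2: "body_mass (a0,a1,a2) (2,l) = a2" for l by (simp_all add: body_mass_def)
  have p10: "twogon_pos n \<rho>1 \<rho>2 (1,0) = of_real \<rho>1" by (simp only: pos1 ee0 mult_1_right)
  have p20: "twogon_pos n \<rho>1 \<rho>2 (2,0) = of_real \<rho>2" by (simp only: pos2 ee0 mult_1_right)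
  have e1: "- Re (twogon_pos n \<rho>1 \<rho>2 (1,0)) = (\<Sum>j\<in>bodies n - {(1,0)}. body_mass (a0,a1,a2) j *
     (Re (twogon_pos n \<rho>1 \<rho>2 j - twogon_pos n \<rho>1 \<rho>2 (1,0)) / (cmod (twogon_pos n \<rho>1 \<rho>2 j - twogon_pos n \<rho>1 \<rho>2 (1,0))) ^ 3))"
    by (rule re_eq[OF sol b1]) (simp add: body_mass_def pos)
  have e2: "- Re (twogon_pos n \<rho>1 \<rho>2 (2,0)) = (\<Sum>j\<in>bodies n - {(2,0)}. body_mass (a0,a1,a2) j *
     (Re (twogon_pos n \<rho>1 \<rho>2 j - twogon_pos n \<rho>1 \<rho>2 (2,0)) / (cmod (twogon_pos n \<rho>1 \<rho>2 j - twogon_pos n \<rho>1 \<rho>2 (2,0))) ^ 3))"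
    by (rule re_eq[OF sol b2]) (simp add: body_mass_def pos)
  have s1: "(\<Sum>l\<in>{1..<n}. Re (of_real \<rho>1 * ee n l - of_real \<rho>1) / cmod (of_real \<rho>1 * ee n l - of_real \<rho>1)^3) = sig n / \<rho>1^2"
    unfolding sig_def self_scale[OF r1] sum_distrib_left[symmetric] by simp
  have s2: "(\<Sum>l\<in>{1..<n}. Re (of_real \<rho>2 * ee n l - of_real \<rho>2) / cmod (of_real \<rho>2 * ee n l - of_real \<rho>2)^3) = sig n / \<rho>2^2"
    unfolding sig_def self_scale[OF r2] sum_distrib_left[symmetric] by simp
  have c1: "Re (0 - of_real \<rho>1) / cmod (0 - of_real \<rho>1 :: complex)^3 = - 1 / \<rho>1^2"
    using r1 by (simp add: power3_eq_cube power2_eq_square)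
  have c2: "Re (0 - of_real \<rho>2) / cmod (0 - of_real \<rho>2 :: complex)^3 = - 1 / \<rho>2^2"
    using r2 by (simp add: power3_eq_cube power2_eq_square)
  from e1[unfolded p10] show "- \<rho>1 = - a0 / \<rho>1^2 + a1 * (sig n / \<rho>1^2) + a2 * Yf n \<rho>1 \<rho>2"
    unfolding sum_split1 pos0 pos1 pos2 m0 m1 m2 c1 sum_distrib_left[symmetric] s1 Yf_def[symmetric]
    by simp
  from e2[unfolded p20] show "- \<rho>2 = - a0 / \<rho>2^2 + a1 * Zf n \<rho>1 \<rho>2 + a2 * (sig n / \<rho>2^2)"
    unfolding sum_split2 pos0 pos1 pos2 m0 m1 m2 c2 sum_distrib_left[symmetric] s2 Zf_def[symmetric]
    by simp
qed

lemma alg: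
  fixes d1 d2 u P Q :: real
  assumes "P > 0" "Q < 0" "d1 * u + d2 * P = 0" "d1 * Q + d2 * u = 0"
  shows "d1 = 0 \<and> d2 = 0"
proof -
  have "d1 * (u * u - P * Q) = u * (d1 * u + d2 * P) - P * (d1 * Q + d2 * u)"
    by (simp add: algebra_simps)
  also have "\<dots> = 0" using assms by simp
  finally have z: "d1 * (u * u - P * Q) = 0" .
  have "P * Q < 0" using assms by (simp add: mult_pos_neg)
  moreover have "u * u \<ge> 0" by simp
  ultimately have "u * u - P * Q \<noteq> 0" by linarith
  with z have d1: "d1 = 0" by simp
  with assms have "d2 * P = 0" by simp
  with assms d1 show ?thesis by simp
qed

lemma solve1:
  assumes "(\<rho>::real) > 0" "- \<rho> = - a0 / \<rho>^2 + a1 * (s / \<rho>^2) + a2 * Y"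
  shows "a0 = \<rho>^3 + a1 * s + \<rho>^2 * Y * a2"
proof -
  have h: "a0 / \<rho>^2 = \<rho> + a1 * (s / \<rho>^2) + a2 * Y" using assms(2) by linarith
  have "a0 = \<rho>^2 * (a0 / \<rho>^2)" using assms(1) by simp
  also have "\<dots> = \<rho>^2 * (\<rho> + a1 * (s / \<rho>^2) + a2 * Y)" by (simp only: h)
  also have "\<dots> = \<rho>^3 + a1 * s + \<rho>^2 * Y * a2" using assms(1)
    by (simp add: field_simps power3_eq_cube power2_eq_square)
  finally show ?thesis .
qed

lemma solve2:
  assumes "(\<rho>::real) > 0" "- \<rho> = - a0 / \<rho>^2 + a1 * Z + a2 * (s / \<rho>^2)"
  shows "a0 = \<rho>^3 + \<rho>^2 * Z * a1 + a2 * s"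
proof -
  have h: "a0 / \<rho>^2 = \<rho> + a1 * Z + a2 * (s / \<rho>^2)" using assms(2) by linarith
  have "a0 = \<rho>^2 * (a0 / \<rho>^2)" using assms(1) by simp
  also have "\<dots> = \<rho>^2 * (\<rho> + a1 * Z + a2 * (s / \<rho>^2))" by (simp only: h)
  also have "\<dots> = \<rho>^3 + \<rho>^2 * Z * a1 + a2 * s" using assms(1)
    by (simp add: field_simps power3_eq_cube power2_eq_square)
  finally show ?thesis .
qed

theorem proposition4:
  fixes n :: nat and \<rho>1 \<rho>2 :: real
  assumes "n \<ge> 2" and "0 < \<rho>1" and "\<rho>1 < \<rho>2"
  shows "\<not> really_perverse n \<rho>1 \<rho>2"
proof
  assume "really_perverse n \<rho>1 \<rho>2"
  then obtain m m' where ne: "m \<noteq> m'" and rm: "rel_eq_mass_system n \<rho>1 \<rho>2 m"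
    and rm': "rel_eq_mass_system n \<rho>1 \<rho>2 m'" and tm: "total_mass n m = total_mass n m'"
    unfolding really_perverse_def by blast
  obtain a0 a1 a2 where ma: "m = (a0, a1, a2)" by (cases m)
  obtain b0 b1 b2 where mb: "m' = (b0, b1, b2)" by (cases m')
  have n: "n > 0" using assms by simp
  have r1: "\<rho>1 > 0" and r2: "\<rho>2 > 0" using assms by auto
  define s where "s = sig n"
  define Y where "Y = Yf n \<rho>1 \<rho>2"
  define Z where "Z = Zf n \<rho>1 \<rho>2"
  have Y: "Y \<ge> 0" unfolding Y_def Yf_def using K1[OF r1 assms(3) n] .
  have Z: "Z < - real n / \<rho>2^2" unfolding Z_def Zf_def using K2[OF r1 assms(3) n] .
  note ea = eqs[OF rm[unfolded ma] r1 assms(3) n, folded s_def Y_def Z_def]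
  note eb = eqs[OF rm'[unfolded mb] r1 assms(3) n, folded s_def Y_def Z_def]
  have A1: "a0 = \<rho>1^3 + a1 * s + \<rho>1^2 * Y * a2" by (rule solve1[OF r1 ea(1)])
  have B1: "b0 = \<rho>1^3 + b1 * s + \<rho>1^2 * Y * b2" by (rule solve1[OF r1 eb(1)])
  have A2: "a0 = \<rho>2^3 + \<rho>2^2 * Z * a1 + a2 * s" by (rule solve2[OF r2 ea(2)])
  have B2: "b0 = \<rho>2^3 + \<rho>2^2 * Z * b1 + b2 * s" by (rule solve2[OF r2 eb(2)])
  have tot: "a0 + real n * (a1 + a2) = b0 + real n * (b1 + b2)"
    using tm unfolding ma mb total_mass_def by simp
  have E1: "(a1 - b1) * (real n + s) + (a2 - b2) * (real n + \<rho>1^2 * Y) = 0"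
  proof -
    have "(a1 - b1) * (real n + s) + (a2 - b2) * (real n + \<rho>1^2 * Y)
       = (a1 * s + \<rho>1^2 * Y * a2) - (b1 * s + \<rho>1^2 * Y * b2) + real n * (a1 + a2) - real n * (b1 + b2)"
      by (simp add: algebra_simps)
    also have "\<dots> = 0" using A1 B1 tot by simp
    finally show ?thesis .
  qed
  have E2: "(a1 - b1) * (real n + \<rho>2^2 * Z) + (a2 - b2) * (real n + s) = 0"
  proof -
    have "(a1 - b1) * (real n + \<rho>2^2 * Z) + (a2 - b2) * (real n + s)
       = (\<rho>2^2 * Z * a1 + a2 * s) - (\<rho>2^2 * Z * b1 + b2 * s) + real n * (a1 + a2) - real n * (b1 + b2)"
      by (simp add: algebra_simps)
    also have "\<dots> = 0" using A2 B2 tot by simp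
    finally show ?thesis .
  qed
  have P: "real n + \<rho>1^2 * Y > 0" using Y n by (simp add: add_pos_nonneg)
  have Q: "real n + \<rho>2^2 * Z < 0"
  proof -
    have "\<rho>2^2 * Z < \<rho>2^2 * (- real n / \<rho>2^2)" using Z r2 by (intro mult_strict_left_mono) auto
    thus ?thesis using r2 by simp
  qed
  have "a1 - b1 = 0 \<and> a2 - b2 = 0"
    by (rule alg[OF P Q E1 E2])
  hence "a1 = b1" "a2 = b2" by auto
  with tot have "a0 = b0" by simp
  with \<open>a1 = b1\<close> \<open>a2 = b2\<close> ne ma mb show False by simp
qed

end
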